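(* Let $X$ be a Dedekind complete vector lattice and let $E,T\in\mathcal{L}^r(X)$ be positive operators such that (i) $E^2=E$, (ii) $ET=TE=T$, and (iii) $E\wedge T=0$ in $\mathcal{L}^r(X)$. Let $Y=E(X)$ with the order inherited from $X$ (a Dedekind complete vector lattice). Then $T$ maps $Y$ into $Y$ and $\mathrm{id}_Y\wedge T|_Y=0$ in $\mathcal{L}^r(Y)$.
   Context: $\mathcal{L}^r(X)$ denotes the space of regular operators (differences of positive operators) on $X$, which is a Dedekind complete vector lattice under the Riesz–Kantorovich formulas when $X$ is Dedekind complete; the same for $\mathcal{L}^r(Y)$. *)

theory Defs
  imports Complex_Main
begin

text \<open>Operators on an ordered vector space Y (given as a carrier subset of an
ambient type, with the order inherited from it). Operators are functions on the
ambient type; only their values on Y matter.\<close>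

definition lin_op_on :: "'a::real_vector set \<Rightarrow> ('a \<Rightarrow> 'a) \<Rightarrow> bool" where
  "lin_op_on Y S \<longleftrightarrow> (\<forall>y\<in>Y. S y \<in> Y)
     \<and> (\<forall>x\<in>Y. \<forall>y\<in>Y. S (x + y) = S x + S y)
     \<and> (\<forall>c. \<forall>x\<in>Y. S (c *\<^sub>R x) = c *\<^sub>R S x)"

definition positive_op_on :: "'a::ordered_real_vector set \<Rightarrow> ('a \<Rightarrow> 'a) \<Rightarrow> bool" where
  "positive_op_on Y S \<longleftrightarrow> lin_op_on Y S \<and> (\<forall>y\<in>Y. 0 \<le> y \<longrightarrow> 0 \<le> S y)"

definition regular_op_on :: "'a::ordered_real_vector set \<Rightarrow> ('a \<Rightarrow> 'a) \<Rightarrow> bool" where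
  "regular_op_on Y S \<longleftrightarrow> (\<exists>P Q. positive_op_on Y P \<and> positive_op_on Y Q
       \<and> (\<forall>y\<in>Y. S y = P y - Q y))"

definition op_le_on :: "'a::ordered_real_vector set \<Rightarrow> ('a \<Rightarrow> 'a) \<Rightarrow> ('a \<Rightarrow> 'a) \<Rightarrow> bool" where
  "op_le_on Y S R \<longleftrightarrow> positive_op_on Y (\<lambda>y. R y - S y)"

definition is_inf_Lr :: "'a::ordered_real_vector set \<Rightarrow> ('a \<Rightarrow> 'a) \<Rightarrow> ('a \<Rightarrow> 'a) \<Rightarrow> ('a \<Rightarrow> 'a) \<Rightarrow> bool" where
  "is_inf_Lr Y A B C \<longleftrightarrow> regular_op_on Y A \<and> regular_op_on Y B \<and> regular_op_on Y C
     \<and> op_le_on Y C A \<and> op_le_on Y C B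
     \<and> (\<forall>S. regular_op_on Y S \<and> op_le_on Y S A \<and> op_le_on Y S B \<longrightarrow> op_le_on Y S C)"

end

theory Submission
  imports Defs
begin

definition subsp :: "'a::real_vector set \<Rightarrow> bool" where
  "subsp Y \<longleftrightarrow> (\<forall>x\<in>Y. \<forall>y\<in>Y. x + y \<in> Y) \<and> (\<forall>c. \<forall>x\<in>Y. c *\<^sub>R x \<in> Y)"

lemma subsp_diff: "subsp Y \<Longrightarrow> x \<in> Y \<Longrightarrow> y \<in> Y \<Longrightarrow> x - y \<in> Y"
  unfolding subsp_def
  by (metis diff_conv_add_uminus scaleR_minus1_left)

lemma lin_diff:
  assumes "subsp Y" "lin_op_on Y A" "lin_op_on Y B"
  shows "lin_op_on Y (\<lambda>y. A y - B y)"
  using assms unfolding lin_op_on_def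
  by (auto simp: subsp_diff scaleR_diff_right algebra_simps)

lemma regular_lin:
  assumes "subsp Y" "regular_op_on Y S"
  shows "lin_op_on Y S"
proof -
  obtain P Q where pq: "positive_op_on Y P" "positive_op_on Y Q" "\<forall>y\<in>Y. S y = P y - Q y"
    using assms(2) unfolding regular_op_on_def by blast
  have "lin_op_on Y (\<lambda>y. P y - Q y)"
    using lin_diff[OF assms(1)] pq unfolding positive_op_on_def by blast
  then show ?thesis using pq(3) assms(1) unfolding lin_op_on_def subsp_def
    by auto
qed

lemma range_subsp:
  assumes "lin_op_on UNIV E"
  shows "subsp (range E)"
  unfolding subsp_def
proof safe
  fix a b show "E a + E b \<in> range E" using assms unfolding lin_op_on_def
    by (metis UNIV_I rangeI)
next
  fix c a show "c *\<^sub>R E a \<in> range E" using assms unfolding lin_op_on_def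
    by (metis UNIV_I rangeI)
qed

lemma pos_regular: "0 \<in> Y \<Longrightarrow> positive_op_on Y P \<Longrightarrow> regular_op_on Y P"
  unfolding regular_op_on_def positive_op_on_def lin_op_on_def
  by (rule exI[of _ P], rule exI[of _ "\<lambda>_. 0"]) (auto intro: exI[of _ 0])

theorem lemma4p2:
  fixes E T :: "'a::{ordered_real_vector, conditionally_complete_lattice} \<Rightarrow> 'a"
  assumes "positive_op_on UNIV E" and "positive_op_on UNIV T"
    and "E \<circ> E = E"
    and "E \<circ> T = T" and "T \<circ> E = T"
    and "is_inf_Lr UNIV E T (\<lambda>_. 0)"
  shows "(\<forall>y\<in>range E. T y \<in> range E) \<and> is_inf_Lr (range E) id T (\<lambda>_. 0)"
proof -
  let ?Y = "range E"
  have EE: "E (E x) = E x" for x using assms(3) by (metis comp_apply)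
  have ET: "E (T x) = T x" for x using assms(4) by (metis comp_apply)
  have TE: "T (E x) = T x" for x using assms(5) by (metis comp_apply)
  have linE: "lin_op_on UNIV E" and linT: "lin_op_on UNIV T"
    using assms(1,2) unfolding positive_op_on_def by auto
  have E0: "E 0 = 0" using linE unfolding lin_op_on_def
    by (metis UNIV_I scale_zero_left)
  have Y0: "0 \<in> ?Y" by (metis E0 rangeI)
  have sY: "subsp ?Y" by (rule range_subsp[OF linE])
  have Tmap: "\<forall>y\<in>?Y. T y \<in> ?Y" by (metis ET rangeI)
  have posid: "positive_op_on ?Y id"
    unfolding positive_op_on_def lin_op_on_def by auto
  have posT: "positive_op_on ?Y T"
    using Tmap assms(2) unfolding positive_op_on_def lin_op_on_def by auto
  have pos0: "positive_op_on ?Y (\<lambda>_. 0)"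
    unfolding positive_op_on_def lin_op_on_def using Y0 by auto
  have le0: "op_le_on ?Y (\<lambda>_. 0) id" "op_le_on ?Y (\<lambda>_. 0) T"
    using posid posT unfolding op_le_on_def by (simp_all add: id_def)
  have main: "op_le_on ?Y S (\<lambda>_. 0)"
    if S: "regular_op_on ?Y S" "op_le_on ?Y S id" "op_le_on ?Y S T" for S
  proof -
    have linS: "lin_op_on ?Y S" by (rule regular_lin[OF sY S(1)])
    obtain P Q where pq: "positive_op_on ?Y P" "positive_op_on ?Y Q" "\<forall>y\<in>?Y. S y = P y - Q y"
      using S(1) unfolding regular_op_on_def by blast
    have posc: "positive_op_on UNIV (\<lambda>x. R (E x))" if R: "positive_op_on ?Y R" for R
      using R assms(1) unfolding positive_op_on_def lin_op_on_def by auto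
    have linSE: "lin_op_on UNIV (\<lambda>x. S (E x))"
      using linS linE unfolding lin_op_on_def by auto
    have regSE: "regular_op_on UNIV (\<lambda>x. S (E x))"
      unfolding regular_op_on_def
      using posc[OF pq(1)] posc[OF pq(2)] pq(3) by blast
    have S1: "0 \<le> y - S y" if "y \<in> ?Y" "0 \<le> y" for y
      using S(2) that unfolding op_le_on_def positive_op_on_def by auto
    have S2: "0 \<le> T y - S y" if "y \<in> ?Y" "0 \<le> y" for y
      using S(3) that unfolding op_le_on_def positive_op_on_def by auto
    have Epos: "0 \<le> E x" if "0 \<le> x" for x
      using assms(1) that unfolding positive_op_on_def by auto
    have "op_le_on UNIV (\<lambda>x. S (E x)) E"
      unfolding op_le_on_def positive_op_on_def
      using lin_diff[OF _ linE linSE] S1 Epos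
      by (auto simp: subsp_def EE)
    moreover have "op_le_on UNIV (\<lambda>x. S (E x)) T"
      unfolding op_le_on_def positive_op_on_def
      using lin_diff[OF _ linT linSE] S2 Epos
      by (auto simp: subsp_def) (metis TE rangeI)
    ultimately have "op_le_on UNIV (\<lambda>x. S (E x)) (\<lambda>_. 0)"
      using assms(6) regSE unfolding is_inf_Lr_def by blast
    then have neg: "0 \<le> 0 - S (E x)" if "0 \<le> x" for x
      using that unfolding op_le_on_def positive_op_on_def by auto
    have lin0: "lin_op_on ?Y (\<lambda>_. 0)" using pos0 unfolding positive_op_on_def by auto
    show ?thesis
      unfolding op_le_on_def positive_op_on_def
      using lin_diff[OF sY lin0 linS] neg by (auto simp: EE) (metis EE diff_0 neg_0_le_iff_le)
  qed
  show ?thesis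
    unfolding is_inf_Lr_def
    using Tmap pos_regular[OF Y0 posid] pos_regular[OF Y0 posT] pos_regular[OF Y0 pos0] le0 main
    by blast
qed

end
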